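(* Let $n\in\mathbb N$ and let $G\subset H$ be subgroups of the symmetric group $S_n$. If for a ballean $X$ the $G$-symmetric power $[X]^n_G$ is normal, then the $H$-symmetric power $[X]^n_H$ is normal.
   Context: A ballean is a pair $(X,\mathcal E_X)$ where $X$ is a set and $\mathcal E_X$ is a family of subsets of $X\times X$ (entourages) such that: each $E\in\mathcal E_X$ contains the diagonal $\Delta_X$; for any $E,F\in\mathcal E_X$ there is $D\in\mathcal E_X$ with $E\circ F^{-1}\subset D$; and $\bigcup\mathcal E_X=X\times X$. For $E\in\mathcal E_X$, $x\in X$, $A\subset X$: $E[x]=\{y:(x,y)\in E\}$, $E[A]=\bigcup_{a\in A}E[a]$. $B\subset X$ is bounded if $B\subset E[x]$ for some $E\in\mathcal E_X$, $x\in X$; $\mathcal B_X$ is the family of bounded sets. Sets $A,B$ are asymptotically disjoint if $E[A]\cap E[B]\in\mathcal B_X$ for all $E\in\mathcal E_X$; $U$ is an asymptotic neighborhood of $A$ if $E[A]\setminus U\in\mathcal B_X$ for all $E$; $X$ is normal if any two asymptotically disjoint sets have disjoint asymptotic neighborhoods. The power $X^n$ ($n=\{0,\dots,n-1\}$) has entourages $\{(x,y)\in X^n\times X^n:(x(i),y(i))\in E_i\ \forall i\}$, $E_i\in\mathcal E_X$. For a subgroup $G\subset S_n$, $[X]^n_G=\{xG:x\in X^n\}$ where $xG=\{x\circ g:g\in G\}$, with entourages $\hat E=\{(xG,yG):(x,y)\in E\}$ for $E$ an entourage of $X^n$. *)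

theory Defs
  imports "HOL-Algebra.Sym_Groups" "HOL-Library.FuncSet"
begin

definition ballean :: "'a set \<Rightarrow> ('a \<times> 'a) set set \<Rightarrow> bool" where
  "ballean X EE \<longleftrightarrow>
     (\<forall>E\<in>EE. E \<subseteq> X \<times> X \<and> Id_on X \<subseteq> E) \<and>
     (\<forall>E\<in>EE. \<forall>F\<in>EE. \<exists>D\<in>EE. E O F\<inverse> \<subseteq> D) \<and>
     \<Union>EE = X \<times> X"

definition bounded_set :: "'a set \<Rightarrow> ('a \<times> 'a) set set \<Rightarrow> 'a set \<Rightarrow> bool" where
  "bounded_set X EE B \<longleftrightarrow> (\<exists>E\<in>EE. \<exists>x\<in>X. B \<subseteq> E `` {x})"

definition asymp_disjoint :: "'a set \<Rightarrow> ('a \<times> 'a) set set \<Rightarrow> 'a set \<Rightarrow> 'a set \<Rightarrow> bool" where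
  "asymp_disjoint X EE A B \<longleftrightarrow> (\<forall>E\<in>EE. bounded_set X EE (E `` A \<inter> E `` B))"

definition asymp_nbhd :: "'a set \<Rightarrow> ('a \<times> 'a) set set \<Rightarrow> 'a set \<Rightarrow> 'a set \<Rightarrow> bool" where
  "asymp_nbhd X EE U A \<longleftrightarrow> (\<forall>E\<in>EE. bounded_set X EE (E `` A - U))"

definition normal_ballean :: "'a set \<Rightarrow> ('a \<times> 'a) set set \<Rightarrow> bool" where
  "normal_ballean X EE \<longleftrightarrow>
     (\<forall>A B. A \<subseteq> X \<and> B \<subseteq> X \<and> asymp_disjoint X EE A B \<longrightarrow>
        (\<exists>U V. U \<subseteq> X \<and> V \<subseteq> X \<and> asymp_nbhd X EE U A \<and> asymp_nbhd X EE V B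
               \<and> U \<inter> V = {}))"

text \<open>The power X^n, with coordinates indexed by {1..n} (matching sym_group n).\<close>
definition pow_carrier :: "nat \<Rightarrow> 'a set \<Rightarrow> (nat \<Rightarrow> 'a) set" where
  "pow_carrier n X = PiE {1..n} (\<lambda>_. X)"

definition pow_ents :: "nat \<Rightarrow> 'a set \<Rightarrow> ('a \<times> 'a) set set \<Rightarrow> ((nat \<Rightarrow> 'a) \<times> (nat \<Rightarrow> 'a)) set set" where
  "pow_ents n X EE =
     {{(x, y). x \<in> pow_carrier n X \<and> y \<in> pow_carrier n X \<and> (\<forall>i\<in>{1..n}. (x i, y i) \<in> Es i)}
      | Es. \<forall>i\<in>{1..n}. Es i \<in> EE}"

definition orbit_of :: "(nat \<Rightarrow> nat) set \<Rightarrow> (nat \<Rightarrow> 'a) \<Rightarrow> (nat \<Rightarrow> 'a) set" where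
  "orbit_of G x = (\<lambda>g. x \<circ> g) ` G"

definition sympow_carrier :: "nat \<Rightarrow> (nat \<Rightarrow> nat) set \<Rightarrow> 'a set \<Rightarrow> (nat \<Rightarrow> 'a) set set" where
  "sympow_carrier n G X = orbit_of G ` pow_carrier n X"

definition sympow_ents :: "nat \<Rightarrow> (nat \<Rightarrow> nat) set \<Rightarrow> 'a set \<Rightarrow> ('a \<times> 'a) set set
    \<Rightarrow> ((nat \<Rightarrow> 'a) set \<times> (nat \<Rightarrow> 'a) set) set set" where
  "sympow_ents n G X EE =
     (\<lambda>E. (\<lambda>(x, y). (orbit_of G x, orbit_of G y)) ` E) ` pow_ents n X EE"

end

theory Submission
  imports Defs
begin

lemma bounded_mono: "bounded_set X EE B \<Longrightarrow> C \<subseteq> B \<Longrightarrow> bounded_set X EE C"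
  unfolding bounded_set_def by blast

lemma transfer:
  assumes nY: "normal_ballean Y EY"
  and eY: "\<forall>e\<in>EY. e \<subseteq> Y \<times> Y"
  and eZ: "\<forall>e\<in>EZ. e \<subseteq> Z \<times> Z"
  and sq: "q ` Y = Z"
  and pA: "\<forall>e'\<in>EY. \<exists>e\<in>EZ. \<forall>s t. (s,t)\<in>e' \<longrightarrow> (q s, q t)\<in>e"
  and pB: "\<forall>C. bounded_set Z EZ C \<longrightarrow> bounded_set Y EY {y\<in>Y. q y \<in> C}"
  and pC: "\<forall>e\<in>EZ. \<exists>e'\<in>EY. \<forall>A. \<forall>y\<in>Y. q y \<in> e``A \<longrightarrow> y \<in> e'``{y'\<in>Y. q y' \<in> A}"
  shows "normal_ballean Z EZ"
proof -
  have pa: "bounded_set Z EZ (q ` B)" if "bounded_set Y EY B" for B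
  proof -
    from that obtain e' c where e': "e'\<in>EY" "c\<in>Y" "B \<subseteq> e'``{c}" unfolding bounded_set_def by blast
    from pA e'(1) obtain e where e: "e\<in>EZ" "\<forall>s t. (s,t)\<in>e' \<longrightarrow> (q s, q t)\<in>e" by blast
    have "q ` B \<subseteq> e``{q c}" using e'(3) e(2) by blast
    moreover have "q c \<in> Z" using sq e'(2) by blast
    ultimately show ?thesis using e(1) unfolding bounded_set_def by blast
  qed
  show ?thesis unfolding normal_ballean_def
  proof (intro allI impI)
    fix A B assume h: "A \<subseteq> Z \<and> B \<subseteq> Z \<and> asymp_disjoint Z EZ A B"
    define A' where "A' = {y\<in>Y. q y \<in> A}"
    define B' where "B' = {y\<in>Y. q y \<in> B}"
    have "asymp_disjoint Y EY A' B'" unfolding asymp_disjoint_def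
    proof
      fix e' assume e': "e' \<in> EY"
      from pA e' obtain e where e: "e\<in>EZ" "\<forall>s t. (s,t)\<in>e' \<longrightarrow> (q s, q t)\<in>e" by blast
      have bd: "bounded_set Z EZ (e``A \<inter> e``B)" using h e(1) unfolding asymp_disjoint_def by blast
      have "e'``A' \<inter> e'``B' \<subseteq> {y\<in>Y. q y \<in> e``A \<inter> e``B}"
      proof
        fix y assume y: "y \<in> e'``A' \<inter> e'``B'"
        then obtain a b where ab: "a \<in> A'" "(a,y) \<in> e'" "b \<in> B'" "(b,y) \<in> e'" by blast
        have "y \<in> Y" using ab(2) eY e' by blast
        moreover have "(q a, q y) \<in> e" "(q b, q y) \<in> e" using e(2) ab by blast+
        moreover have "q a \<in> A" "q b \<in> B" using ab unfolding A'_def B'_def by blast+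
        ultimately show "y \<in> {y\<in>Y. q y \<in> e``A \<inter> e``B}" by blast
      qed
      then show "bounded_set Y EY (e'``A' \<inter> e'``B')" using pB bd bounded_mono by blast
    qed
    moreover have "A' \<subseteq> Y" "B' \<subseteq> Y" unfolding A'_def B'_def by auto
    ultimately have "\<exists>U V. U \<subseteq> Y \<and> V \<subseteq> Y \<and> asymp_nbhd Y EY U A' \<and> asymp_nbhd Y EY V B' \<and> U \<inter> V = {}"
      using nY[unfolded normal_ballean_def, rule_format, of A' B'] by simp
    then obtain U' V' where UV: "U' \<subseteq> Y" "V' \<subseteq> Y" "asymp_nbhd Y EY U' A'"
       "asymp_nbhd Y EY V' B'" "U' \<inter> V' = {}" by blast
    define U where "U = {z\<in>Z. \<forall>y\<in>Y. q y = z \<longrightarrow> y \<in> U'}"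
    define V where "V = {z\<in>Z. \<forall>y\<in>Y. q y = z \<longrightarrow> y \<in> V'}"
    have nb: "asymp_nbhd Z EZ {z\<in>Z. \<forall>y\<in>Y. q y = z \<longrightarrow> y \<in> W'} D"
      if "asymp_nbhd Y EY W' {y\<in>Y. q y \<in> D}" for W' D
      unfolding asymp_nbhd_def
    proof
      fix e assume e: "e \<in> EZ"
      from pC e obtain e' where e': "e'\<in>EY" "\<forall>A. \<forall>y\<in>Y. q y \<in> e``A \<longrightarrow> y \<in> e'``{y'\<in>Y. q y' \<in> A}" by blast
      have "e``D - {z\<in>Z. \<forall>y\<in>Y. q y = z \<longrightarrow> y \<in> W'} \<subseteq> q ` (e'``{y\<in>Y. q y \<in> D} - W')"
      proof
        fix z assume z: "z \<in> e``D - {z\<in>Z. \<forall>y\<in>Y. q y = z \<longrightarrow> y \<in> W'}"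
        have "z \<in> Z" using z eZ e by blast
        with z obtain y where y: "y\<in>Y" "q y = z" "y \<notin> W'" by blast
        then have "y \<in> e'``{y'\<in>Y. q y' \<in> D}" using e'(2) z by blast
        then show "z \<in> q ` (e'``{y\<in>Y. q y \<in> D} - W')" using y by blast
      qed
      moreover have "bounded_set Y EY (e'``{y\<in>Y. q y \<in> D} - W')"
        using that e'(1) unfolding asymp_nbhd_def by blast
      ultimately show "bounded_set Z EZ (e``D - {z\<in>Z. \<forall>y\<in>Y. q y = z \<longrightarrow> y \<in> W'})"
        using pa bounded_mono by blast
    qed
    have "asymp_nbhd Z EZ U A" using nb[of U' A] UV(3) unfolding U_def A'_def by simp
    moreover have "asymp_nbhd Z EZ V B" using nb[of V' B] UV(4) unfolding V_def B'_def by simp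
    moreover have "U \<inter> V = {}"
    proof (rule ccontr)
      assume "U \<inter> V \<noteq> {}"
      then obtain z where z: "z \<in> U" "z \<in> V" by blast
      then have "z \<in> Z" unfolding U_def by simp
      then obtain y where y: "y \<in> Y" "q y = z" using sq by blast
      then have "y \<in> U'" "y \<in> V'" using z unfolding U_def V_def by auto
      then show False using UV(5) by blast
    qed
    moreover have "U \<subseteq> Z" "V \<subseteq> Z" unfolding U_def V_def by auto
    ultimately show "\<exists>U V. U \<subseteq> Z \<and> V \<subseteq> Z \<and> asymp_nbhd Z EZ U A \<and> asymp_nbhd Z EZ V B \<and> U \<inter> V = {}"
      by blast
  qed
qed


lemma subgrp_facts:
  assumes "subgroup H (sym_group n)"
  shows "id \<in> H" "\<And>a b. a\<in>H \<Longrightarrow> b\<in>H \<Longrightarrow> a\<circ>b \<in> H" "\<And>h. h\<in>H \<Longrightarrow> \<exists>k\<in>H. h\<circ>k = id"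
    "\<And>h. h\<in>H \<Longrightarrow> h permutes {1..n}"
proof -
  interpret subgroup H "sym_group n" by fact
  interpret group "sym_group n" by (rule sym_group_is_group)
  have "\<one>\<^bsub>sym_group n\<^esub> \<in> H" by (rule subgroup.one_closed[OF assms])
  then show "id \<in> H" by (simp add: sym_group_one)
  show "\<And>a b. a\<in>H \<Longrightarrow> b\<in>H \<Longrightarrow> a\<circ>b \<in> H" using subgroup.m_closed[OF assms] by (simp add: sym_group_mult)
  show "\<And>h. h\<in>H \<Longrightarrow> h permutes {1..n}" using subgroup.mem_carrier[OF assms] sym_group_carrier by blast
  fix h assume h: "h \<in> H"
  have "inv\<^bsub>sym_group n\<^esub> h \<in> H" using subgroup.m_inv_closed[OF assms] h by blast
  moreover have "h \<otimes>\<^bsub>sym_group n\<^esub> inv\<^bsub>sym_group n\<^esub> h = \<one>\<^bsub>sym_group n\<^esub>" using r_inv subgroup.mem_carrier[OF assms] h by blast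
  ultimately show "\<exists>k\<in>H. h\<circ>k = id" by (auto simp: sym_group_mult sym_group_one)
qed

lemma orb_shift:
  assumes "subgroup H (sym_group n)" "g \<in> H"
  shows "orbit_of H (y \<circ> g) = orbit_of H y"
proof
  show "orbit_of H (y \<circ> g) \<subseteq> orbit_of H y"
    using subgrp_facts(2)[OF assms(1) assms(2)] unfolding orbit_of_def by (auto simp: comp_assoc)
  show "orbit_of H y \<subseteq> orbit_of H (y \<circ> g)"
  proof
    fix z assume "z \<in> orbit_of H y"
    then obtain h where h: "h\<in>H" "z = y \<circ> h" unfolding orbit_of_def by blast
    obtain k where k: "k\<in>H" "g\<circ>k = id" using subgrp_facts(3)[OF assms] by blast
    have "k \<circ> h \<in> H" using subgrp_facts(2)[OF assms(1) k(1) h(1)] .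
    moreover have "z = (y \<circ> g) \<circ> (k \<circ> h)" using h(2) k(2) by (metis comp_assoc id_comp)
    ultimately show "z \<in> orbit_of H (y \<circ> g)" unfolding orbit_of_def by blast
  qed
qed

lemma orb_eq:
  assumes "id \<in> H" "orbit_of H u = orbit_of H x"
  shows "\<exists>h\<in>H. u = x \<circ> h"
proof -
  have "u \<in> orbit_of H u" using assms(1) unfolding orbit_of_def by (intro image_eqI[of _ _ id]) auto
  then show ?thesis using assms(2) unfolding orbit_of_def by auto
qed

lemma q_orb:
  assumes "subgroup G (sym_group n)" "subgroup H (sym_group n)" "G \<subseteq> H"
  shows "orbit_of H (SOME x. x \<in> orbit_of G y) = orbit_of H y"
proof -
  have "y \<in> orbit_of G y" using subgrp_facts(1)[OF assms(1)] unfolding orbit_of_def by (intro image_eqI[of _ _ id]) auto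
  then have "(SOME x. x \<in> orbit_of G y) \<in> orbit_of G y" by (rule someI[where P="\<lambda>x. x \<in> orbit_of G y"])
  then obtain g where "g \<in> G" "(SOME x. x \<in> orbit_of G y) = y \<circ> g" unfolding orbit_of_def by blast
  then show ?thesis using orb_shift[OF assms(2)] assms(3) by auto
qed

lemma pow_perm:
  assumes "h permutes {1..n}" "u \<in> pow_carrier n X"
  shows "u \<circ> h \<in> pow_carrier n X"
proof -
  have "\<And>x. x \<in> {1..n} \<Longrightarrow> h x \<in> {1..n}" by (metis assms(1) permutes_in_image)
  moreover have "\<And>x. x \<notin> {1..n} \<Longrightarrow> h x = x" using assms(1) by (simp add: permutes_not_in)
  ultimately show ?thesis using assms(2) unfolding pow_carrier_def PiE_def Pi_def extensional_def
    by auto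
qed

lemma b_up:
  assumes "ballean X EE" "E1\<in>EE" "E2\<in>EE"
  shows "\<exists>D\<in>EE. E1\<subseteq>D \<and> E2\<subseteq>D"
proof -
  have ax: "\<And>E. E\<in>EE \<Longrightarrow> E \<subseteq> X\<times>X \<and> Id_on X \<subseteq> E" "\<And>E F. E\<in>EE \<Longrightarrow> F\<in>EE \<Longrightarrow> \<exists>D\<in>EE. E O F\<inverse> \<subseteq> D"
    using assms(1) unfolding ballean_def by blast+
  obtain D1 where D1: "D1\<in>EE" "E1 O E2\<inverse> \<subseteq> D1" using ax(2) assms by blast
  have "E2\<inverse> \<subseteq> E1 O E2\<inverse>" using ax(1)[OF assms(2)] ax(1)[OF assms(3)] by blast
  then have 1: "E2 \<subseteq> D1\<inverse>" using D1 by (metis converse_subset_swap subset_trans)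
  obtain D where D: "D\<in>EE" "E1 O D1\<inverse> \<subseteq> D" using ax(2) assms D1 by blast
  have "E1 \<subseteq> E1 O D1\<inverse>" using ax(1)[OF assms(2)] ax(1)[OF D1(1)] by blast
  moreover have "E2 \<subseteq> E1 O D1\<inverse>" using 1 ax(1)[OF assms(3)] ax(1)[OF assms(2)] by blast
  ultimately show ?thesis using D by blast
qed

lemma b_comp:
  assumes "ballean X EE" "E1\<in>EE" "E2\<in>EE"
  shows "\<exists>D\<in>EE. E1 O E2 \<subseteq> D"
proof -
  have ax: "\<And>E. E\<in>EE \<Longrightarrow> E \<subseteq> X\<times>X \<and> Id_on X \<subseteq> E" "\<And>E F. E\<in>EE \<Longrightarrow> F\<in>EE \<Longrightarrow> \<exists>D\<in>EE. E O F\<inverse> \<subseteq> D"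
    using assms(1) unfolding ballean_def by blast+
  obtain D1 where D1: "D1\<in>EE" "E2 O E2\<inverse> \<subseteq> D1" using ax(2) assms by blast
  have "E2\<inverse> \<subseteq> E2 O E2\<inverse>" using ax(1)[OF assms(3)] by blast
  then have 1: "E2 \<subseteq> D1\<inverse>" using D1 by (metis converse_subset_swap subset_trans)
  obtain D where D: "D\<in>EE" "E1 O D1\<inverse> \<subseteq> D" using ax(2) assms D1 by blast
  then show ?thesis using 1 by blast
qed

lemma b_fin:
  assumes "ballean X EE" "finite S" "S \<noteq> {}" "S \<subseteq> EE"
  shows "\<exists>F\<in>EE. \<forall>E\<in>S. E \<subseteq> F"
  using assms(2,3,4)
proof (induction S rule: finite_ne_induct)
  case (singleton x) then show ?case by blast
next
  case (insert x F)
  then obtain F0 where "F0\<in>EE" "\<forall>E\<in>F. E \<subseteq> F0" by blast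
  moreover obtain D where "D\<in>EE" "x \<subseteq> D" "F0 \<subseteq> D" using b_up[OF assms(1), of x F0] insert calculation by blast
  ultimately show ?case by blast
qed


lemma b_bound:
  assumes "ballean X EE" "\<forall>i\<in>{1..n::nat}. Es i \<in> EE"
  shows "\<exists>F. (\<forall>i\<in>{1..n}. F \<in> EE) \<and> (\<forall>i\<in>{1..n}. Es i \<subseteq> F)"
proof (cases "n = 0")
  case True then show ?thesis by auto
next
  case False
  then have "Es ` {1..n} \<noteq> {}" by auto
  then obtain F where "F\<in>EE" "\<forall>E\<in>Es ` {1..n}. E \<subseteq> F" using b_fin[OF assms(1), of "Es ` {1..n}"] assms(2) by blast
  then show ?thesis by blast
qed

theorem theorem1p13:
  fixes n :: nat and G H :: "(nat \<Rightarrow> nat) set"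
    and X :: "'a set" and EE :: "('a \<times> 'a) set set"
  assumes "subgroup G (sym_group n)" and "subgroup H (sym_group n)" and "G \<subseteq> H"
    and "ballean X EE"
    and "normal_ballean (sympow_carrier n G X) (sympow_ents n G X EE)"
  shows "normal_ballean (sympow_carrier n H X) (sympow_ents n H X EE)"
proof -
  note sG = assms(1) and sH = assms(2) and GH = assms(3) and bal = assms(4)
  define P where "P = pow_carrier n X"
  define ent where "ent Es = {(x,y). x\<in>P \<and> y\<in>P \<and> (\<forall>i\<in>{1..n}. (x i, y i) \<in> Es i)}" for Es :: "nat \<Rightarrow> ('a\<times>'a) set"
  define hat where "hat K E = (\<lambda>(x, y). (orbit_of K x, orbit_of K y)) ` E"
    for K :: "(nat \<Rightarrow> nat) set" and E :: "((nat \<Rightarrow> 'a) \<times> (nat \<Rightarrow> 'a)) set"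
  have entsK: "sympow_ents n K X EE = {hat K (ent Es) | Es. \<forall>i\<in>{1..n}. Es i \<in> EE}" for K
    unfolding sympow_ents_def pow_ents_def hat_def ent_def P_def by blast
  have carK: "sympow_carrier n K X = orbit_of K ` P" for K
    unfolding sympow_carrier_def P_def by simp
  have memhat: "(s,t) \<in> hat K (ent Es) \<longleftrightarrow> (\<exists>u v. s = orbit_of K u \<and> t = orbit_of K v \<and> u\<in>P \<and> v\<in>P
      \<and> (\<forall>i\<in>{1..n}. (u i, v i) \<in> Es i))" for K Es s t
    unfolding hat_def ent_def by force
  define q where "q S = orbit_of H (SOME x. x \<in> S)" for S :: "(nat \<Rightarrow> 'a) set"
  have qO: "q (orbit_of G y) = orbit_of H y" for y
    unfolding q_def using q_orb[OF sG sH GH] .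
  have idG: "id \<in> G" and idH: "id \<in> H" using subgrp_facts(1)[OF sG] subgrp_facts(1)[OF sH] .
  have entsub: "\<forall>e\<in>sympow_ents n K X EE. e \<subseteq> sympow_carrier n K X \<times> sympow_carrier n K X" for K
    unfolding entsK carK hat_def ent_def by auto
  show ?thesis
  proof (rule transfer[where q=q, OF assms(5) entsub entsub])
    show "q ` sympow_carrier n G X = sympow_carrier n H X"
      unfolding carK using qO by (simp add: image_image)
    show "\<forall>e'\<in>sympow_ents n G X EE. \<exists>e\<in>sympow_ents n H X EE. \<forall>s t. (s, t) \<in> e' \<longrightarrow> (q s, q t) \<in> e"
    proof
      fix e' assume "e' \<in> sympow_ents n G X EE"
      then obtain Es where Es: "\<forall>i\<in>{1..n}. Es i \<in> EE" "e' = hat G (ent Es)" unfolding entsK by blast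
      have "\<forall>s t. (s, t) \<in> e' \<longrightarrow> (q s, q t) \<in> hat H (ent Es)"
        unfolding Es(2) memhat using qO by auto
      moreover have "hat H (ent Es) \<in> sympow_ents n H X EE" unfolding entsK using Es(1) by blast
      ultimately show "\<exists>e\<in>sympow_ents n H X EE. \<forall>s t. (s, t) \<in> e' \<longrightarrow> (q s, q t) \<in> e" by blast
    qed
    show "\<forall>C. bounded_set (sympow_carrier n H X) (sympow_ents n H X EE) C \<longrightarrow>
        bounded_set (sympow_carrier n G X) (sympow_ents n G X EE) {y \<in> sympow_carrier n G X. q y \<in> C}"
    proof (intro allI impI)
      fix C assume "bounded_set (sympow_carrier n H X) (sympow_ents n H X EE) C"
      then obtain Es x0 where Es: "\<forall>i\<in>{1..n}. Es i \<in> EE" "x0 \<in> P" "C \<subseteq> hat H (ent Es) `` {orbit_of H x0}"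
        unfolding bounded_set_def entsK carK by blast
      have x0X: "x0 i \<in> X" if "i \<in> {1..n}" for i using Es(2) that unfolding P_def pow_carrier_def by auto
      have "\<exists>F. (\<forall>i\<in>{1..n}. F \<in> EE) \<and> (\<forall>i\<in>{1..n}. \<forall>j\<in>{1..n}. \<forall>k\<in>{1..n}. \<forall>b. (x0 j, b) \<in> Es k \<longrightarrow> (x0 i, b) \<in> F)"
      proof (cases "n = 0")
        case True then show ?thesis by auto
      next
        case False
        obtain F0 where F0: "\<forall>i\<in>{1..n}. F0 \<in> EE" "\<forall>i\<in>{1..n}. Es i \<subseteq> F0" using b_bound[OF bal Es(1)] by blast
        define Ep where "Ep = (\<lambda>(i,j). SOME E. E\<in>EE \<and> (x0 i, x0 j)\<in>E)"
        have Ep: "Ep (i,j) \<in> EE \<and> (x0 i, x0 j) \<in> Ep (i,j)" if "i\<in>{1..n}" "j\<in>{1..n}" for i j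
        proof -
          have "(x0 i, x0 j) \<in> \<Union>EE" using bal x0X that unfolding ballean_def by blast
          then have "\<exists>E. E\<in>EE \<and> (x0 i, x0 j)\<in>E" by blast
          then show ?thesis unfolding Ep_def by (simp, rule someI_ex)
        qed
        have ne: "Ep ` ({1..n}\<times>{1..n}) \<noteq> {}" using False by auto
        obtain F1 where F1: "F1\<in>EE" "\<forall>E\<in>Ep ` ({1..n}\<times>{1..n}). E \<subseteq> F1"
          using b_fin[OF bal _ ne] Ep by blast
        have "1 \<in> {1..n}" using False by auto
        then obtain F where F: "F\<in>EE" "F1 O F0 \<subseteq> F" using b_comp[OF bal F1(1)] F0(1) by blast
        have "\<forall>i\<in>{1..n}. \<forall>j\<in>{1..n}. \<forall>k\<in>{1..n}. \<forall>b. (x0 j, b) \<in> Es k \<longrightarrow> (x0 i, b) \<in> F"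
        proof (intro ballI allI impI)
          fix i j k b assume ijk: "i\<in>{1..n}" "j\<in>{1..n}" "k\<in>{1..n}" "(x0 j, b) \<in> Es k"
          have "(x0 i, x0 j) \<in> F1" using Ep[OF ijk(1,2)] F1(2) ijk by blast
          moreover have "(x0 j, b) \<in> F0" using F0(2) ijk by blast
          ultimately show "(x0 i, b) \<in> F" using F(2) by blast
        qed
        then show ?thesis using F(1) by blast
      qed
      then obtain F where F: "\<forall>i\<in>{1..n}. F \<in> EE"
        "\<forall>i\<in>{1..n}. \<forall>j\<in>{1..n}. \<forall>k\<in>{1..n}. \<forall>b. (x0 j, b) \<in> Es k \<longrightarrow> (x0 i, b) \<in> F" by blast
      have "{y \<in> sympow_carrier n G X. q y \<in> C} \<subseteq> hat G (ent (\<lambda>_. F)) `` {orbit_of G x0}"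
      proof
        fix y assume yy: "y \<in> {y \<in> sympow_carrier n G X. q y \<in> C}"
        then obtain w where w: "w\<in>P" "y = orbit_of G w" unfolding carK by blast
        have "orbit_of H w \<in> C" using yy w(2) qO by simp
        then have "(orbit_of H x0, orbit_of H w) \<in> hat H (ent Es)" using Es(3) by blast
        then obtain u v where uv: "orbit_of H x0 = orbit_of H u" "orbit_of H w = orbit_of H v" "u\<in>P" "v\<in>P"
          "\<forall>i\<in>{1..n}. (u i, v i) \<in> Es i" unfolding memhat by blast
        obtain h1 where h1: "h1\<in>H" "u = x0 \<circ> h1" using orb_eq[OF idH uv(1)[symmetric]] by blast
        obtain h2 where h2: "h2\<in>H" "v = w \<circ> h2" using orb_eq[OF idH uv(2)[symmetric]] by blast
        have p1: "h1 permutes {1..n}" and p2: "h2 permutes {1..n}" using subgrp_facts(4)[OF sH] h1 h2 by auto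
        have "\<forall>i'\<in>{1..n}. (x0 i', w i') \<in> F"
        proof
          fix i' assume i': "i' \<in> {1..n}"
          obtain i where i: "h2 i = i'" using permutes_surj[OF p2] by (metis surjD)
          have iin: "i \<in> {1..n}" using i i' p2 by (metis permutes_in_image)
          have "h1 i \<in> {1..n}" using iin p1 by (metis permutes_in_image)
          moreover have "(x0 (h1 i), w i') \<in> Es i" using uv(5) iin h1(2) h2(2) i by auto
          ultimately show "(x0 i', w i') \<in> F" using F(2) i' iin by blast
        qed
        then have "(orbit_of G x0, y) \<in> hat G (ent (\<lambda>_. F))" unfolding memhat using w Es(2) by blast
        then show "y \<in> hat G (ent (\<lambda>_. F)) `` {orbit_of G x0}" by blast
      qed
      moreover have "hat G (ent (\<lambda>_. F)) \<in> sympow_ents n G X EE" unfolding entsK using F(1) by blast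
      moreover have "orbit_of G x0 \<in> sympow_carrier n G X" unfolding carK using Es(2) by blast
      ultimately show "bounded_set (sympow_carrier n G X) (sympow_ents n G X EE) {y \<in> sympow_carrier n G X. q y \<in> C}"
        unfolding bounded_set_def by blast
    qed
    show "\<forall>e\<in>sympow_ents n H X EE. \<exists>e'\<in>sympow_ents n G X EE. \<forall>A. \<forall>y\<in>sympow_carrier n G X.
        q y \<in> e `` A \<longrightarrow> y \<in> e' `` {y' \<in> sympow_carrier n G X. q y' \<in> A}"
    proof
      fix e assume "e \<in> sympow_ents n H X EE"
      then obtain Es where Es: "\<forall>i\<in>{1..n}. Es i \<in> EE" "e = hat H (ent Es)" unfolding entsK by blast
      obtain F0 where F0: "\<forall>i\<in>{1..n}. F0 \<in> EE" "\<forall>i\<in>{1..n}. Es i \<subseteq> F0" using b_bound[OF bal Es(1)] by blast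
      have "\<forall>A. \<forall>y\<in>sympow_carrier n G X.
        q y \<in> e `` A \<longrightarrow> y \<in> hat G (ent (\<lambda>_. F0)) `` {y' \<in> sympow_carrier n G X. q y' \<in> A}"
      proof (intro allI ballI impI)
        fix A y assume y: "y \<in> sympow_carrier n G X" and qy: "q y \<in> e `` A"
        then obtain w where w: "w\<in>P" "y = orbit_of G w" unfolding carK by blast
        from qy obtain a where a: "a \<in> A" "(a, orbit_of H w) \<in> hat H (ent Es)" unfolding Es(2) w(2) qO by blast
        from a(2) obtain u v where uv0: "a = orbit_of H u" "orbit_of H w = orbit_of H v" "u\<in>P" "v\<in>P"
          "\<forall>i\<in>{1..n}. (u i, v i) \<in> Es i" unfolding memhat by blast
        have uv: "orbit_of H u \<in> A" "orbit_of H w = orbit_of H v" "u\<in>P" "v\<in>P"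
          "\<forall>i\<in>{1..n}. (u i, v i) \<in> Es i" using uv0 a(1) by auto
        obtain h2 where h2: "h2\<in>H" "v = w \<circ> h2" using orb_eq[OF idH uv(2)[symmetric]] by blast
        obtain k where k: "k\<in>H" "h2 \<circ> k = id" using subgrp_facts(3)[OF sH h2(1)] by blast
        have pk: "k permutes {1..n}" using subgrp_facts(4)[OF sH k(1)] .
        have u'P: "u \<circ> k \<in> P" using pow_perm[OF pk] uv(3) unfolding P_def by blast
        have "\<forall>i\<in>{1..n}. ((u \<circ> k) i, w i) \<in> F0"
        proof
          fix i assume i: "i \<in> {1..n}"
          have ki: "k i \<in> {1..n}" using i pk by (metis permutes_in_image)
          have "w i = v (k i)" using h2(2) k(2) by (metis comp_apply id_apply)
          moreover have "(u (k i), v (k i)) \<in> Es (k i)" using uv(5) ki by blast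
          moreover have "Es (k i) \<subseteq> F0" using F0(2) ki by blast
          ultimately show "((u \<circ> k) i, w i) \<in> F0" by auto
        qed
        then have "(orbit_of G (u \<circ> k), y) \<in> hat G (ent (\<lambda>_. F0))" unfolding memhat using w u'P by blast
        moreover have "q (orbit_of G (u \<circ> k)) \<in> A"
          using qO[of "u \<circ> k"] orb_shift[OF sH k(1), of u] uv(1) by simp
        moreover have "orbit_of G (u \<circ> k) \<in> sympow_carrier n G X" using u'P unfolding carK by blast
        ultimately have "orbit_of G (u \<circ> k) \<in> {y' \<in> sympow_carrier n G X. q y' \<in> A} \<and>
           (orbit_of G (u \<circ> k), y) \<in> hat G (ent (\<lambda>_. F0))" by blast
        then show "y \<in> hat G (ent (\<lambda>_. F0)) `` {y' \<in> sympow_carrier n G X. q y' \<in> A}" by blast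
      qed
      moreover have "hat G (ent (\<lambda>_. F0)) \<in> sympow_ents n G X EE" unfolding entsK using F0(1) by blast
      ultimately show "\<exists>e'\<in>sympow_ents n G X EE. \<forall>A. \<forall>y\<in>sympow_carrier n G X.
        q y \<in> e `` A \<longrightarrow> y \<in> e' `` {y' \<in> sympow_carrier n G X. q y' \<in> A}" by blast
    qed
  qed
qed

end
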